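(* Let $z,w>0$ be such that $\mathrm{DAG}(z,w)<\infty$, let $G$ be a random labelled DAG drawn from the Boltzmann model with parameters $(z,w)$, and let $N_1,N_2$ be the sizes of the first two layers of its root-layering ($N_2=0$ if there is only one layer or none). Then for every integer $n_1\ge1$ with $\mathbb P_{z,w}[N_1=n_1]>0$ and every integer $n_2\ge0$, \[\mathbb P_{z,w}[N_2=n_2\mid N_1=n_1]=\frac{\left((1-(1+w)^{-n_1})z\right)^{n_2}}{(1+w)^{\binom{n_2}2}n_2!}\cdot\frac{\mathrm{Set}(-(1+w)^{-n_2}z,w)}{\mathrm{Set}(-(1+w)^{-n_1}z,w)}.\] (By the time-homogeneity of the layer-size chain, this also gives $\mathbb P_{z,w}[N_{k+1}=n_2\mid N_k=n_1]$ for every $k\ge1$.)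
   Context: $\mathrm{Set}(z,w)=\sum_{n\ge0}\frac{z^n}{(1+w)^{\binom n2}n!}$. A labelled DAG with $n$ vertices is a directed acyclic graph on vertex set $\{1,\dots,n\}$; $v(G)$, $e(G)$ denote its numbers of vertices and edges; a source is a vertex of in-degree $0$. $\mathrm{DAG}(z,w)=\sum_G \frac{z^{v(G)}w^{e(G)}}{(1+w)^{\binom{v(G)}{2}}v(G)!}$ over all labelled DAGs. The Boltzmann model with parameters $(z,w)$ assigns probability $\frac{z^{v(G)}w^{e(G)}}{(1+w)^{\binom{v(G)}{2}}v(G)!\,\mathrm{DAG}(z,w)}$ to each labelled DAG $G$. The root-layering of a DAG $G=(V,E)$ is the ordered partition $(V_1,\dots,V_k)$ of $V$ where $V_i$ is the set of sources of the graph obtained from $G$ by deleting $V_1\cup\dots\cup V_{i-1}$; $N_i=|V_i|$. *)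

theory Defs
  imports Complex_Main
begin

definition is_dag :: "nat \<Rightarrow> (nat \<times> nat) set \<Rightarrow> bool" where
  "is_dag n E \<longleftrightarrow> E \<subseteq> {1..n} \<times> {1..n} \<and> acyclic E"

definition SetGF :: "real \<Rightarrow> real \<Rightarrow> real" where
  "SetGF z w = (\<Sum>n. z ^ n / ((1 + w) ^ (n choose 2) * fact n))"

definition bweight :: "real \<Rightarrow> real \<Rightarrow> nat \<Rightarrow> (nat \<times> nat) set \<Rightarrow> real" where
  "bweight z w n E = z ^ n * w ^ card E / ((1 + w) ^ (n choose 2) * fact n)"

definition dag_weight_n :: "real \<Rightarrow> real \<Rightarrow> (nat \<Rightarrow> (nat \<times> nat) set \<Rightarrow> bool) \<Rightarrow> nat \<Rightarrow> real" where
  "dag_weight_n z w P n = (\<Sum>E\<in>{E. is_dag n E \<and> P n E}. bweight z w n E)"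

text \<open>DAG(z,w) < infinity: the (nonnegative) series over all labelled DAGs converges.\<close>
definition DAG_finite :: "real \<Rightarrow> real \<Rightarrow> bool" where
  "DAG_finite z w \<longleftrightarrow> summable (dag_weight_n z w (\<lambda>_ _. True))"

definition DAG_gf :: "real \<Rightarrow> real \<Rightarrow> real" where
  "DAG_gf z w = (\<Sum>n. dag_weight_n z w (\<lambda>_ _. True) n)"

definition boltzmann_prob :: "real \<Rightarrow> real \<Rightarrow> (nat \<Rightarrow> (nat \<times> nat) set \<Rightarrow> bool) \<Rightarrow> real" where
  "boltzmann_prob z w P = (\<Sum>n. dag_weight_n z w P n) / DAG_gf z w"

definition sources :: "nat set \<Rightarrow> (nat \<times> nat) set \<Rightarrow> nat set" where
  "sources V E = {v \<in> V. \<forall>u\<in>V. (u, v) \<notin> E}"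

fun rest :: "nat set \<Rightarrow> (nat \<times> nat) set \<Rightarrow> nat \<Rightarrow> nat set" where
  "rest V E 0 = V"
| "rest V E (Suc k) = rest V E k - sources (rest V E k) E"

text \<open>Root layer V_i (1-indexed): root_layer V E (Suc k) = V_(k+1); empty beyond the last layer.\<close>
definition root_layer :: "nat set \<Rightarrow> (nat \<times> nat) set \<Rightarrow> nat \<Rightarrow> nat set" where
  "root_layer V E i = sources (rest V E (i - 1)) E"

definition layer_size :: "nat \<Rightarrow> (nat \<times> nat) set \<Rightarrow> nat \<Rightarrow> nat" where
  "layer_size n E i = card (root_layer {1..n} E i)"

end

theory Submission
  imports Defs "HOL-Library.FuncSet"
begin

lemma sum_pow_card:
  fixes x :: real
  assumes "finite A"
  shows "(\<Sum>K\<in>Pow A. x ^ card K) = (1 + x) ^ card A"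
proof -
  have "(\<Prod>a\<in>A. x + 1) = (\<Sum>X\<in>Pow A. (\<Prod>a\<in>X. x) * (\<Prod>a\<in>A-X. 1))"
    by (rule prod_add[OF assms])
  then show ?thesis by (simp add: add.commute)
qed

lemma column_sum:
  fixes w :: real
  assumes fS: "finite S" and fR: "finite R" and TR: "T \<subseteq> R"
  shows "(\<Sum>X\<in>{X\<in>Pow (S\<times>R). \<forall>v\<in>T. \<exists>s\<in>S. (s,v)\<in>X}. w ^ card X)
       = ((1+w) ^ card S - 1) ^ card T * (1+w) ^ (card S * (card R - card T))"
proof -
  define C where "C v = (if v \<in> T then Pow S - {{}} else Pow S)" for v
  have fC: "finite (C v)" for v using fS by (simp add: C_def)
  have "(\<Prod>v\<in>R. \<Sum>Y\<in>C v. w ^ card Y) = (\<Sum>g\<in>PiE R C. \<Prod>v\<in>R. w ^ card (g v))"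
    by (rule prod_sum_PiE) (use fR fC in auto)
  also have "\<dots> = (\<Sum>X\<in>{X\<in>Pow (S\<times>R). \<forall>v\<in>T. \<exists>s\<in>S. (s,v)\<in>X}. w ^ card X)"
  proof (rule sum.reindex_bij_witness[where i = "\<lambda>X. restrict (\<lambda>v. {s. (s,v)\<in>X}) R"
        and j = "\<lambda>g. {(s,v). v\<in>R \<and> s \<in> g v}"])
    fix X assume X: "X \<in> {X\<in>Pow (S\<times>R). \<forall>v\<in>T. \<exists>s\<in>S. (s,v)\<in>X}"
    then show "{(s,v). v\<in>R \<and> s \<in> restrict (\<lambda>v. {s. (s,v)\<in>X}) R v} = X" by auto
    show "restrict (\<lambda>v. {s. (s,v)\<in>X}) R \<in> PiE R C"
      using X by (auto simp: C_def) blast+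
  next
    fix g assume g: "g \<in> PiE R C"
    then show "restrict (\<lambda>v. {s. (s,v)\<in>{(s,v). v\<in>R \<and> s \<in> g v}}) R = g"
      by (intro ext) (simp add: PiE_def extensional_def restrict_def)
    show "{(s,v). v\<in>R \<and> s \<in> g v} \<in> {X\<in>Pow (S\<times>R). \<forall>v\<in>T. \<exists>s\<in>S. (s,v)\<in>X}"
      using g TR unfolding C_def PiE_def Pi_def by (auto split: if_splits) blast+
    have eq: "{(s,v). v\<in>R \<and> s \<in> g v} = (\<lambda>(v,s). (s,v)) ` (SIGMA v:R. g v)" by auto
    have fg: "finite (g v)" if "v \<in> R" for v
      proof -
        have "g v \<subseteq> S" using g that by (auto simp: PiE_def Pi_def C_def split: if_splits)
        then show ?thesis using fS finite_subset by blast
      qed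
    have "card {(s,v). v\<in>R \<and> s \<in> g v} = card (SIGMA v:R. g v)"
      unfolding eq by (rule card_image) (auto simp: inj_on_def)
    also have "\<dots> = (\<Sum>v\<in>R. card (g v))" using fR fg by (simp add: card_SigmaI)
    finally show "w ^ card {(s,v). v\<in>R \<and> s \<in> g v} = (\<Prod>v\<in>R. w ^ card (g v))"
      by (simp add: power_sum)
  qed
  finally have 1: "(\<Sum>X\<in>{X\<in>Pow (S\<times>R). \<forall>v\<in>T. \<exists>s\<in>S. (s,v)\<in>X}. w ^ card X) = (\<Prod>v\<in>R. \<Sum>Y\<in>C v. w ^ card Y)" ..
  have s1: "(\<Sum>Y\<in>Pow S. w ^ card Y) = (1+w) ^ card S" by (rule sum_pow_card[OF fS])
  have s2: "(\<Sum>Y\<in>Pow S - {{}}. w ^ card Y) = (1+w) ^ card S - 1"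
    using fS s1 by (simp add: sum_diff1)
  have "(\<Prod>v\<in>R. \<Sum>Y\<in>C v. w ^ card Y) = (\<Prod>v\<in>R. if v \<in> T then (1+w) ^ card S - 1 else (1+w) ^ card S)"
    by (rule prod.cong) (auto simp: C_def s1 s2)
  also have "\<dots> = (\<Prod>v\<in>T. (1+w) ^ card S - 1) * (\<Prod>v\<in>R-T. (1+w) ^ card S)"
    using fR TR by (simp add: prod.If_cases Int_absorb1 Diff_eq Int_commute)
  also have "\<dots> = ((1+w) ^ card S - 1) ^ card T * (1+w) ^ (card S * (card R - card T))"
    using fR TR by (simp add: card_Diff_subset finite_subset power_mult mult.commute)
  finally show ?thesis using 1 by simp
qed

definition dags :: "nat set \<Rightarrow> (nat \<times> nat) set set" where
  "dags V = {E. E \<subseteq> V \<times> V \<and> acyclic E}"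

lemma finite_dags: "finite V \<Longrightarrow> finite (dags V)"
  by (rule finite_subset[of _ "Pow (V\<times>V)"]) (auto simp: dags_def)

lemma dags_finite_elem: "finite V \<Longrightarrow> E \<in> dags V \<Longrightarrow> finite E"
  by (auto simp: dags_def intro: finite_subset)

lemma trancl_split_aux:
  assumes "(x,y) \<in> (E' \<union> X)\<^sup>+" "E' \<subseteq> R \<times> R" "X \<subseteq> S \<times> R" "S \<inter> R = {}"
  shows "y \<in> R \<and> (x \<in> R \<longrightarrow> (x,y) \<in> E'\<^sup>+)"
  using assms(1)
proof (induction rule: trancl_induct)
  case (base y)
  then show ?case using assms(2-4) by auto
next
  case (step y z)
  then show ?case using assms(2-4) by (auto intro: trancl_into_trancl)
qed

lemma acyclic_union_aux:
  assumes "acyclic E'" "E' \<subseteq> R \<times> R" "X \<subseteq> S \<times> R" "S \<inter> R = {}"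
  shows "acyclic (E' \<union> X)"
  unfolding acyclic_def
proof
  fix x
  show "(x,x) \<notin> (E' \<union> X)\<^sup>+"
  proof
    assume "(x,x) \<in> (E' \<union> X)\<^sup>+"
    from trancl_split_aux[OF this assms(2-4)] have "(x,x) \<in> E'\<^sup>+" by blast
    then show False using assms(1) by (auto simp: acyclic_def)
  qed
qed

lemma dec_sum:
  fixes H :: "(nat \<times> nat) set \<Rightarrow> real"
  assumes fV: "finite V" and SV: "S \<subseteq> V"
  shows "(\<Sum>E\<in>{E\<in>dags V. S \<subseteq> sources V E}. H E)
       = (\<Sum>E'\<in>dags (V-S). \<Sum>X\<in>Pow (S\<times>(V-S)). H (E' \<union> X))"
proof -
  define R where "R = V - S"
  have SR: "S \<inter> R = {}" by (auto simp: R_def)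
  have fR: "finite R" using fV by (simp add: R_def)
  have "(\<Sum>E'\<in>dags R. \<Sum>X\<in>Pow (S\<times>R). H (E' \<union> X)) = (\<Sum>(E',X)\<in>(SIGMA E':dags R. Pow (S\<times>R)). H (E' \<union> X))"
  proof (rule sum.Sigma)
    show "finite (dags R)" using fR by (rule finite_dags)
    have "finite S" using fV SV finite_subset by blast
    then show "\<forall>E'\<in>dags R. finite (Pow (S\<times>R))" using fR by simp
  qed
  also have "\<dots> = (\<Sum>E\<in>{E\<in>dags V. S \<subseteq> sources V E}. H E)"
  proof (rule sum.reindex_bij_witness[where i = "\<lambda>E. (E \<inter> (R\<times>R), E \<inter> (S\<times>R))"
        and j = "\<lambda>(E',X). E' \<union> X"])
    fix E assume E: "E \<in> {E\<in>dags V. S \<subseteq> sources V E}"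
    have sub: "E \<subseteq> (R\<times>R) \<union> (S\<times>R)"
    proof
      fix p assume p: "p \<in> E"
      obtain a b where ab: "p = (a,b)" by (cases p)
      have "a \<in> V" "b \<in> V" using E p ab by (auto simp: dags_def)
      moreover have "b \<notin> S" using E p ab \<open>a \<in> V\<close> by (auto simp: sources_def)
      ultimately show "p \<in> (R\<times>R) \<union> (S\<times>R)" using ab by (auto simp: R_def)
    qed
    then show "(\<lambda>(E',X). E' \<union> X) (E \<inter> (R\<times>R), E \<inter> (S\<times>R)) = E" by auto
    have "acyclic (E \<inter> (R\<times>R))" using E acyclic_subset[of E "E \<inter> (R\<times>R)"] by (auto simp: dags_def)
    then show "(E \<inter> (R\<times>R), E \<inter> (S\<times>R)) \<in> (SIGMA E':dags R. Pow (S\<times>R))"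
      by (auto simp: dags_def)
  next
    fix p assume p: "p \<in> (SIGMA E':dags R. Pow (S\<times>R))"
    obtain E' X where pe: "p = (E',X)" by (cases p)
    have E': "E' \<subseteq> R\<times>R" "acyclic E'" and X: "X \<subseteq> S\<times>R" using p pe by (auto simp: dags_def)
    show "(\<lambda>E. (E \<inter> (R\<times>R), E \<inter> (S\<times>R))) ((\<lambda>(E',X). E' \<union> X) p) = p"
      using E' X SR pe by auto
    have "acyclic (E' \<union> X)" by (rule acyclic_union_aux[OF E'(2,1) X SR])
    moreover have "E' \<union> X \<subseteq> V \<times> V" using E' X SV by (auto simp: R_def)
    moreover have "S \<subseteq> sources V (E' \<union> X)" using E' X SV SR by (auto simp: sources_def)
    ultimately show "(\<lambda>(E',X). E' \<union> X) p \<in> {E\<in>dags V. S \<subseteq> sources V E}"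
      using pe by (auto simp: dags_def)
    show "H ((\<lambda>(E',X). E' \<union> X) p) = (\<lambda>(E',X). H (E' \<union> X)) p" using pe by simp
  qed
  finally show ?thesis by (simp add: R_def)
qed

lemma sources_subset: "sources V E \<subseteq> V" by (auto simp: sources_def)

lemma finite_sources: "finite V \<Longrightarrow> finite (sources V E)"
  using sources_subset finite_subset by blast

lemma sup_sum:
  fixes w :: real
  assumes fV: "finite V" and SV: "S \<subseteq> V"
  shows "(\<Sum>E\<in>{E\<in>dags V. S \<subseteq> sources V E}. w ^ card E)
       = (\<Sum>E'\<in>dags (V-S). w ^ card E') * (1+w) ^ (card S * card (V-S))"
proof -
  have fS: "finite S" using fV SV finite_subset by blast
  have "(\<Sum>E\<in>{E\<in>dags V. S \<subseteq> sources V E}. w ^ card E)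
       = (\<Sum>E'\<in>dags (V-S). \<Sum>X\<in>Pow (S\<times>(V-S)). w ^ card (E' \<union> X))"
    by (rule dec_sum[OF fV SV])
  also have "\<dots> = (\<Sum>E'\<in>dags (V-S). \<Sum>X\<in>Pow (S\<times>(V-S)). w ^ card E' * w ^ card X)"
  proof (intro sum.cong refl)
    fix E' X assume E': "E' \<in> dags (V-S)" and X: "X \<in> Pow (S\<times>(V-S))"
    have "finite E'" using E' fV dags_finite_elem by blast
    moreover have "finite X" using X fS fV by (auto intro: finite_subset)
    moreover have "E' \<inter> X = {}" using E' X by (auto simp: dags_def)
    ultimately show "w ^ card (E' \<union> X) = w ^ card E' * w ^ card X"
      by (simp add: card_Un_disjoint power_add)
  qed
  also have "\<dots> = (\<Sum>E'\<in>dags (V-S). w ^ card E' * (1+w) ^ (card S * card (V-S)))"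
    using sum_pow_card[of "S\<times>(V-S)" w] fS fV by (simp add: sum_distrib_left[symmetric] card_cartesian_product)
  finally show ?thesis by (simp add: sum_distrib_right)
qed

lemma eq_sum:
  fixes w :: real and h :: "nat set \<Rightarrow> real"
  assumes fV: "finite V" and SV: "S \<subseteq> V"
  shows "(\<Sum>E\<in>{E\<in>dags V. sources V E = S}. w ^ card E * h (sources (V-S) E))
       = (\<Sum>E'\<in>dags (V-S). w ^ card E' * h (sources (V-S) E')
            * ((1+w) ^ card S - 1) ^ card (sources (V-S) E')
            * (1+w) ^ (card S * (card (V-S) - card (sources (V-S) E'))))"
proof -
  have fS: "finite S" using fV SV finite_subset by blast
  define R where "R = V - S"
  have fR: "finite R" using fV by (simp add: R_def)
  have "(\<Sum>E\<in>{E\<in>dags V. sources V E = S}. w ^ card E * h (sources R E))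
      = (\<Sum>E\<in>{E\<in>dags V. S \<subseteq> sources V E}. if sources V E = S then w ^ card E * h (sources R E) else 0)"
  proof -
    have "{E\<in>dags V. sources V E = S} = {E\<in>{E\<in>dags V. S \<subseteq> sources V E}. sources V E = S}" by auto
    then show ?thesis using finite_dags[OF fV] by (simp add: sum.inter_filter) (intro sum.cong; auto)
  qed
  also have "\<dots> = (\<Sum>E'\<in>dags R. \<Sum>X\<in>Pow (S\<times>R).
        if sources V (E' \<union> X) = S then w ^ card (E' \<union> X) * h (sources R (E' \<union> X)) else 0)"
    unfolding R_def by (rule dec_sum[OF fV SV])
  also have "\<dots> = (\<Sum>E'\<in>dags R. w ^ card E' * h (sources R E') *
        (\<Sum>X\<in>{X\<in>Pow (S\<times>R). \<forall>v\<in>sources R E'. \<exists>s\<in>S. (s,v)\<in>X}. w ^ card X))"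
  proof (intro sum.cong refl)
    fix E' assume E': "E' \<in> dags R"
    have fE': "finite E'" using E' fR dags_finite_elem by blast
    have "(\<Sum>X\<in>Pow (S\<times>R). if sources V (E' \<union> X) = S then w ^ card (E' \<union> X) * h (sources R (E' \<union> X)) else 0)
        = (\<Sum>X\<in>Pow (S\<times>R). if (\<forall>v\<in>sources R E'. \<exists>s\<in>S. (s,v)\<in>X) then w ^ card E' * h (sources R E') * w ^ card X else 0)"
    proof (intro sum.cong refl)
      fix X assume X: "X \<in> Pow (S\<times>R)"
      have fX: "finite X" using X fS fR by (auto intro: finite_subset)
      have dis: "E' \<inter> X = {}" using E' X by (auto simp: dags_def R_def)
      have src2: "sources R (E' \<union> X) = sources R E'" using X by (auto simp: sources_def R_def)
      have src1: "sources V (E' \<union> X) = S \<longleftrightarrow> (\<forall>v\<in>sources R E'. \<exists>s\<in>S. (s,v)\<in>X)"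
      proof
        assume a: "sources V (E' \<union> X) = S"
        show "\<forall>v\<in>sources R E'. \<exists>s\<in>S. (s,v)\<in>X"
        proof
          fix v assume v: "v \<in> sources R E'"
          then have "v \<notin> S" "v \<in> V" by (auto simp: sources_def R_def)
          then have "v \<notin> sources V (E' \<union> X)" using a by simp
          then obtain u where "u \<in> V" "(u,v) \<in> E' \<union> X" using \<open>v \<in> V\<close> by (auto simp: sources_def)
          moreover have "(u,v) \<notin> E'" using v E' \<open>(u,v) \<in> E' \<union> X\<close> by (auto simp: sources_def dags_def)
          ultimately show "\<exists>s\<in>S. (s,v)\<in>X" using X by auto
        qed
      next
        assume a: "\<forall>v\<in>sources R E'. \<exists>s\<in>S. (s,v)\<in>X"
        show "sources V (E' \<union> X) = S"
        proof
          show "S \<subseteq> sources V (E' \<union> X)" using E' X SV by (auto simp: sources_def dags_def R_def)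
          show "sources V (E' \<union> X) \<subseteq> S"
          proof
            fix v assume v: "v \<in> sources V (E' \<union> X)"
            show "v \<in> S"
            proof (rule ccontr)
              assume "v \<notin> S"
              then have vR: "v \<in> R" using v by (auto simp: sources_def R_def)
              show False
              proof (cases "v \<in> sources R E'")
                case True
                then obtain s where "s \<in> S" "(s,v) \<in> X" using a by blast
                then show False using v SV by (auto simp: sources_def)
              next
                case False
                then obtain u where "u \<in> R" "(u,v) \<in> E'" using vR by (auto simp: sources_def)
                then show False using v by (auto simp: sources_def R_def)
              qed
            qed
          qed
        qed
      qed
      show "(if sources V (E' \<union> X) = S then w ^ card (E' \<union> X) * h (sources R (E' \<union> X)) else 0)
          = (if (\<forall>v\<in>sources R E'. \<exists>s\<in>S. (s,v)\<in>X) then w ^ card E' * h (sources R E') * w ^ card X else 0)"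
        unfolding src1 src2 using fE' fX dis by (simp add: card_Un_disjoint power_add mult_ac) blast
    qed
    also have "\<dots> = (\<Sum>X\<in>{X\<in>Pow (S\<times>R). \<forall>v\<in>sources R E'. \<exists>s\<in>S. (s,v)\<in>X}. w ^ card E' * h (sources R E') * w ^ card X)"
      by (rule sum.inter_filter[symmetric]) (use fS fR in simp)
    finally show "(\<Sum>X\<in>Pow (S\<times>R). if sources V (E' \<union> X) = S then w ^ card (E' \<union> X) * h (sources R (E' \<union> X)) else 0)
       = w ^ card E' * h (sources R E') * (\<Sum>X\<in>{X\<in>Pow (S\<times>R). \<forall>v\<in>sources R E'. \<exists>s\<in>S. (s,v)\<in>X}. w ^ card X)"
      by (simp add: sum_distrib_left)
  qed
  also have "\<dots> = (\<Sum>E'\<in>dags R. w ^ card E' * h (sources R E')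
            * ((1+w) ^ card S - 1) ^ card (sources R E')
            * (1+w) ^ (card S * (card R - card (sources R E'))))"
    using column_sum[OF fS fR sources_subset] by (simp add: mult.assoc)
  finally show ?thesis by (simp add: R_def)
qed

lemma trancl_map_aux:
  assumes "(a,b) \<in> E\<^sup>+"
  shows "(h a, h b) \<in> (map_prod h h ` E)\<^sup>+"
  using assms
proof (induction rule: trancl_induct)
  case (base y)
  then show ?case by (intro r_into_trancl) (auto intro: image_eqI[where x="(a,y)"])
next
  case (step y z)
  then show ?case by (auto intro: trancl_into_trancl image_eqI[where x="(y,z)"])
qed

lemma acyclic_map_aux:
  assumes "acyclic E" "map_prod g g ` (map_prod f f ` E) = E"
  shows "acyclic (map_prod f f ` E)"
  unfolding acyclic_def
proof
  fix y show "(y,y) \<notin> (map_prod f f ` E)\<^sup>+"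
  proof
    assume "(y,y) \<in> (map_prod f f ` E)\<^sup>+"
    from trancl_map_aux[OF this, of g] assms(2) have "(g y, g y) \<in> E\<^sup>+" by simp
    then show False using assms(1) by (auto simp: acyclic_def)
  qed
qed

lemma map_back_aux:
  assumes "E \<subseteq> V \<times> V" "\<And>x. x \<in> V \<Longrightarrow> g (f x) = x"
  shows "map_prod g g ` (map_prod f f ` E) = E"
proof -
  have "map_prod g g ` (map_prod f f ` E) = (map_prod g g \<circ> map_prod f f) ` E" by (simp add: image_comp)
  also have "\<dots> = id ` E"
    by (rule image_cong) (use assms in auto)
  finally show ?thesis by simp
qed

lemma relabel_sum:
  fixes F :: "nat \<Rightarrow> nat \<Rightarrow> real"
  assumes fV: "finite V" and bij: "bij_betw f V V'"
  shows "(\<Sum>E\<in>dags V. F (card E) (card (sources V E))) = (\<Sum>E\<in>dags V'. F (card E) (card (sources V' E)))"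
proof -
  define g where "g = inv_into V f"
  have gf: "g (f x) = x" if "x \<in> V" for x
    using bij that by (simp add: g_def bij_betw_inv_into_left)
  have fg: "f (g y) = y" if "y \<in> V'" for y
    using bij that by (simp add: g_def bij_betw_inv_into_right)
  have gV: "g y \<in> V" if "y \<in> V'" for y
    using bij that by (metis bij_betw_def g_def inv_into_into)
  have fV': "f x \<in> V'" if "x \<in> V" for x using bij that by (auto simp: bij_betw_def)
  have injf: "inj_on f V" using bij by (auto simp: bij_betw_def)
  show ?thesis
  proof (rule sum.reindex_bij_witness[where i = "\<lambda>E. map_prod g g ` E" and j = "\<lambda>E. map_prod f f ` E"])
    fix E assume E: "E \<in> dags V"
    have EV: "E \<subseteq> V \<times> V" and acE: "acyclic E" using E by (auto simp: dags_def)
    show "map_prod g g ` (map_prod f f ` E) = E" by (rule map_back_aux[of E V g f, OF EV gf])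
    have "acyclic (map_prod f f ` E)" by (rule acyclic_map_aux[OF acE map_back_aux[of E V g f, OF EV gf]])
    moreover have "map_prod f f ` E \<subseteq> V' \<times> V'" using EV fV' by auto
    ultimately show "map_prod f f ` E \<in> dags V'" by (simp add: dags_def)
    have injE: "inj_on (map_prod f f) E"
      using EV injf unfolding inj_on_def by (auto; blast)
    have src: "sources V' (map_prod f f ` E) = f ` sources V E"
    proof
      show "sources V' (map_prod f f ` E) \<subseteq> f ` sources V E"
      proof
        fix y assume y: "y \<in> sources V' (map_prod f f ` E)"
        then have yV: "y \<in> V'" by (auto simp: sources_def)
        have "g y \<in> sources V E"
        proof -
          have "(u, g y) \<notin> E" if "u \<in> V" for u
          proof
            assume "(u, g y) \<in> E"
            then have "(f u, f (g y)) \<in> map_prod f f ` E" by force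
            then show False using y fV' that fg yV by (auto simp: sources_def)
          qed
          then show ?thesis using gV yV by (auto simp: sources_def)
        qed
        then show "y \<in> f ` sources V E" using fg yV by force
      qed
      show "f ` sources V E \<subseteq> sources V' (map_prod f f ` E)"
      proof
        fix y assume "y \<in> f ` sources V E"
        then obtain x where x: "x \<in> sources V E" "y = f x" by auto
        have xV: "x \<in> V" using x by (auto simp: sources_def)
        have "(u', y) \<notin> map_prod f f ` E" if "u' \<in> V'" for u'
        proof
          assume "(u', y) \<in> map_prod f f ` E"
          then obtain a b where ab: "(a,b) \<in> E" "f a = u'" "f b = y" by auto
          have "b \<in> V" "a \<in> V" using ab EV by auto
          then have "b = x" using ab(3) x(2) xV injf by (auto simp: inj_on_def)
          then show False using ab x \<open>a \<in> V\<close> by (auto simp: sources_def)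
        qed
        then show "y \<in> sources V' (map_prod f f ` E)" using fV' xV x by (auto simp: sources_def)
      qed
    qed
    have "card (sources V' (map_prod f f ` E)) = card (sources V E)"
      unfolding src by (rule card_image) (use injf sources_subset inj_on_subset in blast)
    moreover have "card (map_prod f f ` E) = card E" by (rule card_image[OF injE])
    ultimately show "F (card (map_prod f f ` E)) (card (sources V' (map_prod f f ` E))) = F (card E) (card (sources V E))"
      by simp
  next
    fix E assume E: "E \<in> dags V'"
    have EV: "E \<subseteq> V' \<times> V'" and acE: "acyclic E" using E by (auto simp: dags_def)
    show "map_prod f f ` (map_prod g g ` E) = E" by (rule map_back_aux[of E V' f g, OF EV fg])
    have "acyclic (map_prod g g ` E)" by (rule acyclic_map_aux[OF acE map_back_aux[of E V' f g, OF EV fg]])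
    moreover have "map_prod g g ` E \<subseteq> V \<times> V" using EV gV by auto
    ultimately show "map_prod g g ` E \<in> dags V" by (simp add: dags_def)
  qed
qed

lemma relabel_std:
  fixes F :: "nat \<Rightarrow> nat \<Rightarrow> real"
  assumes fV: "finite V"
  shows "(\<Sum>E\<in>dags V. F (card E) (card (sources V E))) = (\<Sum>E\<in>dags {1..card V}. F (card E) (card (sources {1..card V} E)))"
proof -
  obtain f where "bij_betw f V {1..card V}"
    using finite_same_card_bij[OF fV, of "{1..card V}"] by auto
  then show ?thesis by (rule relabel_sum[OF fV])
qed

lemma group_by_card:
  fixes G :: "nat \<Rightarrow> real"
  assumes fV: "finite V"
  shows "(\<Sum>K\<in>Pow V. G (card K)) = (\<Sum>k\<le>card V. real (card V choose k) * G k)"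
proof -
  have "(\<Sum>K\<in>Pow V. G (card K)) = (\<Sum>K\<in>Pow V. \<Sum>k\<le>card V. if card K = k then G k else 0)"
  proof (intro sum.cong refl)
    fix K assume "K \<in> Pow V"
    then have "card K \<le> card V" using fV by (simp add: card_mono)
    then show "G (card K) = (\<Sum>k\<le>card V. if card K = k then G k else 0)" by simp
  qed
  also have "\<dots> = (\<Sum>k\<le>card V. \<Sum>K\<in>Pow V. if card K = k then G k else 0)" by (rule sum.swap)
  also have "\<dots> = (\<Sum>k\<le>card V. real (card V choose k) * G k)"
  proof (intro sum.cong refl)
    fix k
    have "(\<Sum>K\<in>Pow V. if card K = k then G k else 0) = (\<Sum>K\<in>{K\<in>Pow V. card K = k}. G k)"
      by (rule sum.inter_filter[symmetric]) (use fV in simp)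
    also have "\<dots> = real (card {K\<in>Pow V. card K = k}) * G k" by simp
    also have "{K\<in>Pow V. card K = k} = {K. K \<subseteq> V \<and> card K = k}" by auto
    finally show "(\<Sum>K\<in>Pow V. if card K = k then G k else 0) = real (card V choose k) * G k"
      using n_subsets[OF fV, of k] by simp
  qed
  finally show ?thesis .
qed

definition dcnt :: "real \<Rightarrow> nat \<Rightarrow> real" where
  "dcnt w m = (\<Sum>E\<in>dags {1..m}. w ^ card E)"

lemma dsum_relabel:
  fixes w :: real
  assumes "finite V"
  shows "(\<Sum>E\<in>dags V. w ^ card E) = dcnt w (card V)"
  using relabel_std[OF assms, of "\<lambda>e s. w ^ e"] by (simp add: dcnt_def)

lemma T_formula:
  fixes w u :: real
  assumes fV: "finite V"
  shows "(\<Sum>E\<in>dags V. w ^ card E * u ^ card (sources V E))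
       = (\<Sum>k\<le>card V. real (card V choose k) * (u - 1) ^ k * (1+w) ^ (k * (card V - k)) * dcnt w (card V - k))"
proof -
  have fD: "finite (dags V)" by (rule finite_dags[OF fV])
  have "(\<Sum>E\<in>dags V. w ^ card E * u ^ card (sources V E))
      = (\<Sum>E\<in>dags V. \<Sum>K\<in>Pow V. if K \<subseteq> sources V E then w ^ card E * (u-1) ^ card K else 0)"
  proof (intro sum.cong refl)
    fix E assume E: "E \<in> dags V"
    have "u ^ card (sources V E) = (\<Sum>K\<in>Pow (sources V E). (u-1) ^ card K)"
      using sum_pow_card[of "sources V E" "u-1"] finite_sources[OF fV] by simp
    also have "\<dots> = (\<Sum>K\<in>{K\<in>Pow V. K \<subseteq> sources V E}. (u-1) ^ card K)"
      by (rule sum.cong) (use sources_subset in auto)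
    also have "\<dots> = (\<Sum>K\<in>Pow V. if K \<subseteq> sources V E then (u-1) ^ card K else 0)"
      by (rule sum.inter_filter) (use fV in simp)
    finally show "w ^ card E * u ^ card (sources V E) = (\<Sum>K\<in>Pow V. if K \<subseteq> sources V E then w ^ card E * (u-1) ^ card K else 0)"
      by (simp add: sum_distrib_left if_distrib cong: if_cong)
  qed
  also have "\<dots> = (\<Sum>K\<in>Pow V. \<Sum>E\<in>dags V. if K \<subseteq> sources V E then w ^ card E * (u-1) ^ card K else 0)"
    by (rule sum.swap)
  also have "\<dots> = (\<Sum>K\<in>Pow V. (u-1) ^ card K * ((1+w) ^ (card K * (card V - card K)) * dcnt w (card V - card K)))"
  proof (intro sum.cong refl)
    fix K assume K: "K \<in> Pow V"
    have fK: "finite K" using K fV finite_subset by auto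
    have "(\<Sum>E\<in>dags V. if K \<subseteq> sources V E then w ^ card E * (u-1) ^ card K else 0)
        = (\<Sum>E\<in>{E\<in>dags V. K \<subseteq> sources V E}. w ^ card E * (u-1) ^ card K)"
      by (rule sum.inter_filter[symmetric, OF fD])
    also have "\<dots> = (u-1) ^ card K * (\<Sum>E\<in>{E\<in>dags V. K \<subseteq> sources V E}. w ^ card E)"
      by (simp add: sum_distrib_left mult.commute)
    also have "\<dots> = (u-1) ^ card K * ((\<Sum>E'\<in>dags (V-K). w ^ card E') * (1+w) ^ (card K * card (V-K)))"
      using sup_sum[OF fV, of K w] K by simp
    also have "\<dots> = (u-1) ^ card K * ((1+w) ^ (card K * (card V - card K)) * dcnt w (card V - card K))"
      using dsum_relabel[of "V-K" w] fV K fK by (simp add: card_Diff_subset)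
    finally show "(\<Sum>E\<in>dags V. if K \<subseteq> sources V E then w ^ card E * (u-1) ^ card K else 0)
        = (u-1) ^ card K * ((1+w) ^ (card K * (card V - card K)) * dcnt w (card V - card K))" .
  qed
  also have "\<dots> = (\<Sum>k\<le>card V. real (card V choose k) * ((u-1) ^ k * ((1+w) ^ (k * (card V - k)) * dcnt w (card V - k))))"
    by (rule group_by_card[OF fV])
  finally show ?thesis by (simp add: mult.assoc)
qed

lemma layer_sum:
  fixes w :: real and \<phi> :: "nat \<Rightarrow> real"
  assumes fV: "finite V"
  shows "(\<Sum>E\<in>{E\<in>dags V. card (sources V E) = k}. w ^ card E * \<phi> (card (sources (V - sources V E) E)))
       = real (card V choose k) * (\<Sum>E\<in>dags {1..card V - k}. w ^ card E * \<phi> (card (sources {1..card V - k} E))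
            * ((1+w) ^ k - 1) ^ card (sources {1..card V - k} E)
            * (1+w) ^ (k * (card V - k - card (sources {1..card V - k} E))))"
proof -
  have fD: "finite (dags V)" by (rule finite_dags[OF fV])
  define SS where "SS = {S\<in>Pow V. card S = k}"
  have fSS: "finite SS" using fV by (simp add: SS_def)
  define \<Psi> where "\<Psi> = (\<Sum>E\<in>dags {1..card V - k}. w ^ card E * \<phi> (card (sources {1..card V - k} E))
            * ((1+w) ^ k - 1) ^ card (sources {1..card V - k} E)
            * (1+w) ^ (k * (card V - k - card (sources {1..card V - k} E))))"
  have "(\<Sum>E\<in>{E\<in>dags V. card (sources V E) = k}. w ^ card E * \<phi> (card (sources (V - sources V E) E)))
      = (\<Sum>E\<in>dags V. if card (sources V E) = k then w ^ card E * \<phi> (card (sources (V - sources V E) E)) else 0)"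
    by (rule sum.inter_filter[OF fD])
  also have "\<dots> = (\<Sum>E\<in>dags V. \<Sum>S\<in>SS. if sources V E = S then w ^ card E * \<phi> (card (sources (V - S) E)) else 0)"
  proof (intro sum.cong refl)
    fix E assume "E \<in> dags V"
    have "sources V E \<in> Pow V" using sources_subset by auto
    then show "(if card (sources V E) = k then w ^ card E * \<phi> (card (sources (V - sources V E) E)) else 0)
        = (\<Sum>S\<in>SS. if sources V E = S then w ^ card E * \<phi> (card (sources (V - S) E)) else 0)"
      using fSS by (simp add: SS_def)
  qed
  also have "\<dots> = (\<Sum>S\<in>SS. \<Sum>E\<in>dags V. if sources V E = S then w ^ card E * \<phi> (card (sources (V - S) E)) else 0)"
    by (rule sum.swap)
  also have "\<dots> = (\<Sum>S\<in>SS. \<Psi>)"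
  proof (intro sum.cong refl)
    fix S assume S: "S \<in> SS"
    have SV: "S \<subseteq> V" and cS: "card S = k" using S by (auto simp: SS_def)
    have fS: "finite S" using SV fV finite_subset by auto
    have "(\<Sum>E\<in>dags V. if sources V E = S then w ^ card E * \<phi> (card (sources (V - S) E)) else 0)
        = (\<Sum>E\<in>{E\<in>dags V. sources V E = S}. w ^ card E * (\<phi> \<circ> card) (sources (V - S) E))"
      unfolding comp_def by (rule sum.inter_filter[symmetric, OF fD])
    also have "\<dots> = (\<Sum>E'\<in>dags (V-S). w ^ card E' * (\<phi> \<circ> card) (sources (V-S) E')
            * ((1+w) ^ card S - 1) ^ card (sources (V-S) E')
            * (1+w) ^ (card S * (card (V-S) - card (sources (V-S) E'))))"
      by (rule eq_sum[OF fV SV])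
    also have "\<dots> = \<Psi>"
      using relabel_std[of "V-S" "\<lambda>e c. w ^ e * \<phi> c * ((1+w) ^ k - 1) ^ c * (1+w) ^ (k * (card V - k - c))"] fV SV fS cS
      by (simp add: card_Diff_subset \<Psi>_def)
    finally show "(\<Sum>E\<in>dags V. if sources V E = S then w ^ card E * \<phi> (card (sources (V - S) E)) else 0) = \<Psi>" .
  qed
  also have "\<dots> = real (card SS) * \<Psi>" by simp
  also have "card SS = card V choose k"
  proof -
    have "SS = {K. K \<subseteq> V \<and> card K = k}" by (auto simp: SS_def)
    then show ?thesis using n_subsets[OF fV] by simp
  qed
  finally show ?thesis by (simp add: \<Psi>_def)
qed

lemma choose2_add: "(k + j) choose 2 = (k choose 2) + (j choose 2) + k * j"
proof (induction j)
  case 0 then show ?case by simp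
next
  case (Suc j)
  have "(k + Suc j) choose 2 = Suc (k + j) choose Suc 1" by (simp add: numeral_2_eq_2)
  also have "\<dots> = ((k + j) choose 1) + ((k + j) choose 2)" by (simp add: numeral_2_eq_2)
  finally have a: "(k + Suc j) choose 2 = ((k + j) choose 1) + ((k + j) choose 2)" .
  have "Suc j choose 2 = (j choose 1) + (j choose 2)"
    by (simp add: numeral_2_eq_2)
  then show ?case using Suc a by simp
qed

lemma term_split:
  fixes z y w d :: real
  assumes "j \<le> r" "w > 0"
  shows "z ^ r / ((1+w) ^ (r choose 2) * fact r) * (real (r choose j) * y ^ j * (1+w) ^ (j * (r - j)) * d)
       = (y * z) ^ j / ((1+w) ^ (j choose 2) * fact j) * (z ^ (r - j) * d / ((1+w) ^ ((r - j) choose 2) * fact (r - j)))"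
proof -
  obtain m where r: "r = j + m" using assms(1) le_Suc_ex by blast
  have q: "(1+w) ^ (r choose 2) = (1+w) ^ (j choose 2) * (1+w) ^ (m choose 2) * (1+w) ^ (j * m)"
    unfolding r choose2_add by (simp add: power_add)
  have c: "real (r choose j) = fact r / (fact j * fact m)"
    using binomial_fact[OF assms(1)] r by simp
  have pos: "(1+w) ^ n > 0" for n using assms(2) by simp
  have fpos: "(fact n :: real) > 0" for n by simp
  have w0: "1 + w \<noteq> 0" using assms(2) by simp
  show ?thesis unfolding q c using pos fpos w0
    by (simp add: r power_add power_mult_distrib field_simps)
qed

definition sterm :: "real \<Rightarrow> real \<Rightarrow> nat \<Rightarrow> real" where
  "sterm x w j = x ^ j / ((1+w) ^ (j choose 2) * fact j)"

lemma delta_eq: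
  "dag_weight_n z w (\<lambda>_ _. True) j = z ^ j * dcnt w j / ((1+w) ^ (j choose 2) * fact j)"
proof -
  have "{E. is_dag j E \<and> True} = dags {1..j}" by (auto simp: is_dag_def dags_def)
  then show ?thesis
    by (simp add: dag_weight_n_def bweight_def dcnt_def sum_divide_distrib sum_distrib_left)
qed

lemma summable_sterm:
  assumes "w > 0"
  shows "summable (\<lambda>j. norm (sterm x w j))"
proof (rule summable_comparison_test[OF _ summable_exp[of "\<bar>x\<bar>"]])
  show "\<exists>N. \<forall>n\<ge>N. norm (norm (sterm x w n)) \<le> inverse (fact n) * \<bar>x\<bar> ^ n"
  proof (intro exI allI impI)
    fix n :: nat
    have "1 \<le> (1+w) ^ (n choose 2)" using assms by simp
    then have "\<bar>x\<bar> ^ n / ((1+w) ^ (n choose 2) * fact n) \<le> \<bar>x\<bar> ^ n / (1 * fact n)"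
      by (intro divide_left_mono mult_right_mono) auto
    then show "norm (norm (sterm x w n)) \<le> inverse (fact n) * \<bar>x\<bar> ^ n"
      using assms by (simp add: sterm_def abs_mult power_abs divide_inverse mult.commute)
  qed
qed

lemma egf:
  fixes z w y :: real
  assumes "w > 0" "DAG_finite z w" "z > 0"
  shows "(\<lambda>r. z ^ r / ((1+w) ^ (r choose 2) * fact r) *
            (\<Sum>j\<le>r. real (r choose j) * y ^ j * (1+w) ^ (j * (r - j)) * dcnt w (r - j)))
         sums (SetGF (y * z) w * DAG_gf z w)"
proof -
  let ?d = "dag_weight_n z w (\<lambda>_ _. True)"
  have dnn: "?d j \<ge> 0" for j
    unfolding dag_weight_n_def bweight_def using assms by (intro sum_nonneg) simp
  have sd: "summable (\<lambda>j. norm (?d j))" using assms(2) dnn by (simp add: DAG_finite_def)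
  have "(\<lambda>r. \<Sum>j\<le>r. sterm (y*z) w j * ?d (r - j)) sums ((\<Sum>j. sterm (y*z) w j) * (\<Sum>j. ?d j))"
    by (rule Cauchy_product_sums[OF summable_sterm[OF assms(1)] sd])
  moreover have "(\<Sum>j. sterm (y*z) w j) = SetGF (y * z) w" by (simp add: SetGF_def sterm_def)
  moreover have "(\<Sum>j. ?d j) = DAG_gf z w" by (simp add: DAG_gf_def)
  moreover have "(\<Sum>j\<le>r. sterm (y*z) w j * ?d (r - j)) = z ^ r / ((1+w) ^ (r choose 2) * fact r) *
            (\<Sum>j\<le>r. real (r choose j) * y ^ j * (1+w) ^ (j * (r - j)) * dcnt w (r - j))" for r
    unfolding sum_distrib_left
  proof (intro sum.cong refl)
    fix j assume "j \<in> {..r}"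
    then have "j \<le> r" by simp
    from term_split[OF this assms(1), of z y "dcnt w (r-j)"]
    show "sterm (y*z) w j * ?d (r - j) = z ^ r / ((1+w) ^ (r choose 2) * fact r) *
            (real (r choose j) * y ^ j * (1+w) ^ (j * (r - j)) * dcnt w (r - j))"
      by (simp add: delta_eq sterm_def)
  qed
  ultimately show ?thesis by simp
qed

lemma pow_split_aux:
  fixes p :: real
  assumes "c \<le> r" "p > 0"
  shows "(p - 1) ^ c * p ^ (r - c) = p ^ r * ((p - 1) / p) ^ c"
proof -
  obtain m where r: "r = c + m" using assms(1) le_Suc_ex by blast
  show ?thesis using assms(2) by (simp add: r power_add power_divide field_simps)
qed

definition Qs :: "real \<Rightarrow> nat \<Rightarrow> nat \<Rightarrow> real" where
  "Qs w k r = (\<Sum>j\<le>r. real (r choose j) * (- ((1+w) powi (- int k))) ^ j * (1+w) ^ (j * (r - j)) * dcnt w (r - j))"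

lemma psi1:
  fixes w :: real
  assumes "w > 0"
  shows "(\<Sum>E\<in>dags {1..r}. w ^ card E * ((1+w) ^ k - 1) ^ card (sources {1..r} E)
            * (1+w) ^ (k * (r - card (sources {1..r} E))))
         = (1+w) ^ (k * r) * Qs w k r"
proof -
  define u where "u = ((1+w) ^ k - 1) / (1+w) ^ k"
  have qk: "(1+w) ^ k > 0" using assms by simp
  have "u = 1 - 1 / (1+w) ^ k"
    using qk assms unfolding u_def by (simp add: diff_divide_distrib)
  then have "u - 1 = - inverse ((1+w) ^ k)" by (simp add: inverse_eq_divide)
  then have u1: "u - 1 = - ((1+w) powi (- int k))"
    by (simp add: power_int_minus)
  have "(\<Sum>E\<in>dags {1..r}. w ^ card E * ((1+w) ^ k - 1) ^ card (sources {1..r} E)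
            * (1+w) ^ (k * (r - card (sources {1..r} E))))
      = (\<Sum>E\<in>dags {1..r}. (1+w) ^ (k * r) * (w ^ card E * u ^ card (sources {1..r} E)))"
  proof (intro sum.cong refl)
    fix E assume "E \<in> dags {1..r}"
    have "card (sources {1..r} E) \<le> r"
      using card_mono[OF _ sources_subset, of "{1..r}" E] by simp
    from pow_split_aux[OF this qk]
    show "w ^ card E * ((1+w) ^ k - 1) ^ card (sources {1..r} E) * (1+w) ^ (k * (r - card (sources {1..r} E)))
        = (1+w) ^ (k * r) * (w ^ card E * u ^ card (sources {1..r} E))"
      unfolding u_def by (simp add: power_mult mult_ac)
  qed
  also have "\<dots> = (1+w) ^ (k * r) * (\<Sum>E\<in>dags {1..r}. w ^ card E * u ^ card (sources {1..r} E))"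
    by (simp add: sum_distrib_left)
  also have "\<dots> = (1+w) ^ (k * r) * Qs w k r"
    using T_formula[of "{1..r}" w u] by (simp add: Qs_def u1)
  finally show ?thesis .
qed

lemma layer1_simp: "layer_size n E 1 = card (sources {1..n} E)"
  by (simp add: layer_size_def root_layer_def)

lemma layer2_simp: "layer_size n E 2 = card (sources ({1..n} - sources {1..n} E) E)"
  by (simp add: layer_size_def root_layer_def numeral_2_eq_2)

lemma dwn_eq:
  "dag_weight_n z w P n = z ^ n / ((1+w) ^ (n choose 2) * fact n) * (\<Sum>E\<in>{E\<in>dags {1..n}. P n E}. w ^ card E)"
proof -
  have "{E. is_dag n E \<and> P n E} = {E\<in>dags {1..n}. P n E}" by (auto simp: is_dag_def dags_def)
  then show ?thesis
    by (simp add: dag_weight_n_def bweight_def sum_divide_distrib sum_distrib_left)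
qed

lemma A_formula:
  fixes w z :: real
  assumes "w > 0"
  shows "dag_weight_n z w (\<lambda>n E. layer_size n E 1 = n1) n
       = z ^ n / ((1+w) ^ (n choose 2) * fact n) * (real (n choose n1) * ((1+w) ^ (n1 * (n - n1)) * Qs w n1 (n - n1)))"
proof -
  have "(\<Sum>E\<in>{E\<in>dags {1..n}. layer_size n E 1 = n1}. w ^ card E)
      = (\<Sum>E\<in>{E\<in>dags {1..n}. card (sources {1..n} E) = n1}. w ^ card E * (\<lambda>_. 1::real) (card (sources ({1..n} - sources {1..n} E) E)))"
    by (simp add: layer_size_def root_layer_def)
  also have "\<dots> = real (n choose n1) * ((1+w) ^ (n1 * (n - n1)) * Qs w n1 (n - n1))"
    using layer_sum[of "{1..n}" w "\<lambda>_. 1" n1] psi1[OF assms, where r="n - n1" and k=n1] by simp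
  finally show ?thesis by (simp add: dwn_eq)
qed

lemma B_formula:
  fixes w z :: real
  assumes "w > 0"
  shows "dag_weight_n z w (\<lambda>n E. layer_size n E 1 = n1 \<and> layer_size n E 2 = n2) n
       = z ^ n / ((1+w) ^ (n choose 2) * fact n) * (real (n choose n1) * (((1+w) ^ n1 - 1) ^ n2
          * (1+w) ^ (n1 * (n - n1 - n2)) * (real ((n - n1) choose n2) * ((1+w) ^ (n2 * (n - n1 - n2)) * Qs w n2 (n - n1 - n2)))))"
proof -
  define r where "r = n - n1"
  define \<phi> :: "nat \<Rightarrow> real" where "\<phi> c = (if c = n2 then 1 else 0)" for c
  have "(\<Sum>E\<in>{E\<in>dags {1..n}. layer_size n E 1 = n1 \<and> layer_size n E 2 = n2}. w ^ card E)
      = (\<Sum>E\<in>{E\<in>dags {1..n}. card (sources {1..n} E) = n1}. w ^ card E * \<phi> (card (sources ({1..n} - sources {1..n} E) E)))"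
  proof -
    have fD: "finite {E\<in>dags {1..n}. card (sources {1..n} E) = n1}" using finite_dags[of "{1..n}"] by simp
    have "{E\<in>dags {1..n}. layer_size n E 1 = n1 \<and> layer_size n E 2 = n2}
        = {E\<in>{E\<in>dags {1..n}. card (sources {1..n} E) = n1}. card (sources ({1..n} - sources {1..n} E) E) = n2}"
      by (auto simp: layer_size_def root_layer_def numeral_2_eq_2)
    then show ?thesis using sum.inter_filter[OF fD, of "\<lambda>E. w ^ card E" "\<lambda>E. card (sources ({1..n} - sources {1..n} E) E) = n2"]
      by (simp add: \<phi>_def if_distrib cong: if_cong)
  qed
  also have "\<dots> = real (n choose n1) * (\<Sum>E\<in>dags {1..r}. w ^ card E * \<phi> (card (sources {1..r} E))
            * ((1+w) ^ n1 - 1) ^ card (sources {1..r} E)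
            * (1+w) ^ (n1 * (r - card (sources {1..r} E))))"
    using layer_sum[of "{1..n}" w \<phi> n1] by (simp add: r_def)
  also have "(\<Sum>E\<in>dags {1..r}. w ^ card E * \<phi> (card (sources {1..r} E))
            * ((1+w) ^ n1 - 1) ^ card (sources {1..r} E)
            * (1+w) ^ (n1 * (r - card (sources {1..r} E))))
      = (\<Sum>E\<in>{E\<in>dags {1..r}. card (sources {1..r} E) = n2}. w ^ card E * ((1+w) ^ n1 - 1) ^ n2 * (1+w) ^ (n1 * (r - n2)))"
  proof -
    have "(\<Sum>E\<in>dags {1..r}. w ^ card E * \<phi> (card (sources {1..r} E))
            * ((1+w) ^ n1 - 1) ^ card (sources {1..r} E)
            * (1+w) ^ (n1 * (r - card (sources {1..r} E))))
       = (\<Sum>E\<in>dags {1..r}. if card (sources {1..r} E) = n2 then w ^ card E * ((1+w) ^ n1 - 1) ^ n2 * (1+w) ^ (n1 * (r - n2)) else 0)"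
      by (intro sum.cong refl) (simp add: \<phi>_def)
    also have "\<dots> = (\<Sum>E\<in>{E\<in>dags {1..r}. card (sources {1..r} E) = n2}. w ^ card E * ((1+w) ^ n1 - 1) ^ n2 * (1+w) ^ (n1 * (r - n2)))"
      by (rule sum.inter_filter[symmetric, OF finite_dags]) simp
    finally show ?thesis .
  qed
  also have "\<dots> = ((1+w) ^ n1 - 1) ^ n2 * (1+w) ^ (n1 * (r - n2)) *
       (\<Sum>E\<in>{E\<in>dags {1..r}. card (sources {1..r} E) = n2}. w ^ card E * (\<lambda>_. 1::real) (card (sources ({1..r} - sources {1..r} E) E)))"
    by (simp add: sum_distrib_left mult_ac)
  also have "\<dots> = ((1+w) ^ n1 - 1) ^ n2 * (1+w) ^ (n1 * (r - n2)) *
       (real (r choose n2) * ((1+w) ^ (n2 * (r - n2)) * Qs w n2 (r - n2)))"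
    using layer_sum[of "{1..r}" w "\<lambda>_. 1" n2] psi1[OF assms, where r="r - n2" and k=n2] by simp
  finally show ?thesis by (simp add: dwn_eq r_def mult_ac)
qed

lemma tt_sums:
  fixes z w :: real
  assumes "w > 0" "DAG_finite z w" "z > 0"
  shows "(\<lambda>r. z ^ r / ((1+w) ^ (r choose 2) * fact r) * Qs w k r) sums (SetGF (- ((1 + w) powi (- int k)) * z) w * DAG_gf z w)"
  using egf[OF assms, of "- ((1 + w) powi (- int k))"] by (simp add: Qs_def)

theorem lemma3:
  fixes z w :: real and n1 n2 :: nat
  assumes "z > 0" and "w > 0" and "DAG_finite z w"
    and "n1 \<ge> 1"
    and "boltzmann_prob z w (\<lambda>n E. layer_size n E 1 = n1) > 0"
  shows "boltzmann_prob z w (\<lambda>n E. layer_size n E 1 = n1 \<and> layer_size n E 2 = n2)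
           / boltzmann_prob z w (\<lambda>n E. layer_size n E 1 = n1)
         = ((1 - (1 + w) powi (- int n1)) * z) ^ n2 / ((1 + w) ^ (n2 choose 2) * fact n2)
           * (SetGF (- ((1 + w) powi (- int n2)) * z) w / SetGF (- ((1 + w) powi (- int n1)) * z) w)"
proof -
  define D where "D = DAG_gf z w"
  define a where "a = z ^ n1 / ((1+w) ^ (n1 choose 2) * fact n1)"
  define S1 where "S1 = SetGF (- ((1 + w) powi (- int n1)) * z) w"
  define S2 where "S2 = SetGF (- ((1 + w) powi (- int n2)) * z) w"
  define c where "c = ((1 - (1 + w) powi (- int n1)) * z) ^ n2 / ((1 + w) ^ (n2 choose 2) * fact n2)"
  define tt where "tt k r = z ^ r / ((1+w) ^ (r choose 2) * fact r) * Qs w k r" for k r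
  define A where "A = dag_weight_n z w (\<lambda>n E. layer_size n E 1 = n1)"
  define B where "B = dag_weight_n z w (\<lambda>n E. layer_size n E 1 = n1 \<and> layer_size n E 2 = n2)"
  have q0: "(1+w) > 0" using assms by simp
  have tts: "tt k sums (SetGF (- ((1 + w) powi (- int k)) * z) w * D)" for k
    unfolding tt_def D_def by (rule tt_sums[OF assms(2,3,1)])
  have Ashift: "A (r + n1) = a * tt n1 r" for r
  proof -
    have "A (r + n1) = z ^ (r + n1) / ((1+w) ^ ((r + n1) choose 2) * fact (r + n1))
        * (real ((r + n1) choose n1) * 1 ^ n1 * (1+w) ^ (n1 * (r + n1 - n1)) * Qs w n1 r)"
      unfolding A_def A_formula[OF assms(2)] by (simp add: mult_ac)
    also have "\<dots> = a * tt n1 r"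
      using term_split[of n1 "r + n1" w z 1 "Qs w n1 r"] assms(2) by (simp add: a_def tt_def)
    finally show ?thesis .
  qed
  have Azero: "A i = 0" if "i < n1" for i
    unfolding A_def A_formula[OF assms(2)] using that by simp
  have Asums: "A sums (a * (S1 * D))"
  proof -
    have "(\<lambda>r. A (r + n1)) sums (a * (S1 * D))"
      unfolding Ashift using sums_mult[OF tts[of n1], of a] by (simp add: S1_def)
    then show ?thesis using sums_zero_iff_shift[of n1 A, OF Azero] by simp
  qed
  have Bshift: "B (r2 + (n1 + n2)) = a * (c * tt n2 r2)" for r2
  proof -
    define n where "n = r2 + (n1 + n2)"
    define r where "r = n2 + r2"
    define p where "p = (1+w) ^ n1"
    define yy where "yy = (p - 1) / p"
    have p0: "p > 0" using q0 by (simp add: p_def)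
    have nr: "n - n1 = r" "n - n1 - n2 = r2" by (auto simp: n_def r_def)
    have ps: "(p - 1) ^ n2 * p ^ (r - n2) = p ^ r * yy ^ n2"
      using pow_split_aux[of n2 r p] p0 by (simp add: r_def yy_def)
    have "B n = z ^ n / ((1+w) ^ (n choose 2) * fact n) * (real (n choose n1) * (((1+w) ^ n1 - 1) ^ n2
          * (1+w) ^ (n1 * r2) * (real (r choose n2) * ((1+w) ^ (n2 * r2) * Qs w n2 r2))))"
      unfolding B_def B_formula[OF assms(2)] nr by (simp add: r_def)
    also have "\<dots> = z ^ n / ((1+w) ^ (n choose 2) * fact n) * (real (n choose n1) * 1 ^ n1 * (1+w) ^ (n1 * (n - n1))
          * (yy ^ n2 * real (r choose n2) * (1+w) ^ (n2 * r2) * Qs w n2 r2))"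
    proof -
      have "((1+w) ^ n1 - 1) ^ n2 * (1+w) ^ (n1 * r2) = (1+w) ^ (n1 * (n - n1)) * yy ^ n2"
        using ps by (simp add: p_def nr power_mult r_def)
      then show ?thesis by (simp add: mult_ac)
    qed
    also have "\<dots> = a * (z ^ r * (yy ^ n2 * real (r choose n2) * (1+w) ^ (n2 * r2) * Qs w n2 r2) / ((1+w) ^ (r choose 2) * fact r))"
      using term_split[of n1 n w z 1 "yy ^ n2 * real (r choose n2) * (1+w) ^ (n2 * r2) * Qs w n2 r2"] assms(2)
      by (simp add: a_def nr n_def r_def add.commute)
    also have "z ^ r * (yy ^ n2 * real (r choose n2) * (1+w) ^ (n2 * r2) * Qs w n2 r2) / ((1+w) ^ (r choose 2) * fact r)
        = z ^ r / ((1+w) ^ (r choose 2) * fact r) * (real (r choose n2) * yy ^ n2 * (1+w) ^ (n2 * (r - n2)) * Qs w n2 r2)"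
      by (simp add: r_def mult_ac)
    also have "\<dots> = (yy * z) ^ n2 / ((1+w) ^ (n2 choose 2) * fact n2) * (z ^ (r - n2) * Qs w n2 r2 / ((1+w) ^ ((r - n2) choose 2) * fact (r - n2)))"
      using term_split[of n2 r w z yy "Qs w n2 r2"] assms(2) by (simp add: r_def)
    also have "yy = 1 - (1 + w) powi (- int n1)"
      using p0 q0 by (simp add: yy_def p_def power_int_minus diff_divide_distrib inverse_eq_divide)
    finally show ?thesis by (simp add: n_def c_def tt_def r_def)
  qed
  have Bzero: "B i = 0" if "i < n1 + n2" for i
  proof (cases "i < n1")
    case True then show ?thesis unfolding B_def B_formula[OF assms(2)] by simp
  next
    case False then have "i - n1 < n2" using that by simp
    then show ?thesis unfolding B_def B_formula[OF assms(2)] by simp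
  qed
  have Bsums: "B sums (a * (c * (S2 * D)))"
  proof -
    have "(\<lambda>r. B (r + (n1 + n2))) sums (a * (c * (S2 * D)))"
      unfolding Bshift using sums_mult[OF sums_mult[OF tts[of n2], of c], of a] by (simp add: S2_def)
    then show ?thesis using sums_zero_iff_shift[of "n1 + n2" B, OF Bzero] by simp
  qed
  have PA: "boltzmann_prob z w (\<lambda>n E. layer_size n E 1 = n1) = a * (S1 * D) / D"
    using sums_unique[OF Asums] by (simp add: boltzmann_prob_def A_def D_def)
  have PB: "boltzmann_prob z w (\<lambda>n E. layer_size n E 1 = n1 \<and> layer_size n E 2 = n2) = a * (c * (S2 * D)) / D"
    using sums_unique[OF Bsums] by (simp add: boltzmann_prob_def B_def D_def)
  have nz: "a * (S1 * D) / D \<noteq> 0" using assms(5) PA by simp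
  then have "D \<noteq> 0" "a \<noteq> 0" "S1 \<noteq> 0" by (auto split: if_splits)
  then show ?thesis unfolding PA PB by (simp add: c_def S1_def S2_def field_simps)
qed

end
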